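(* Let $p_1>p_2>\cdots>p_n$ be distinct positive integers. Enumerate the $\binom n2$ pairs $\{i,j\}$ with $p_i>p_j$ as $k=1,\dots,\binom n2$. For pair $k$, set $m_k=(p_i-p_j)/\gcd(p_i,p_j)$ and $A_k=\{0,\frac1{m_k},\dots,\frac{m_k-1}{m_k}\}$. Then the number of distinct sequences in $\{S_c(\mathbf p): c\in[0,1]\}$ equals $$1+\Big|\bigcup_{k=1}^{\binom n2}A_k\Big| \;=\;1+\sum_{k=1}^{\binom n2}(-1)^{k+1}\sum_{1\le i_1<\cdots<i_k\le\binom n2}\gcd(m_{i_1},\dots,m_{i_k}).$$
   Context: Stationary divisor method with cut point $c\in[0,1]$: seats are allocated one at a time. Initially each party $i$ has $a_i=0$ seats; each next seat goes to a party $i$ maximizing $p_i/(a_i+c)$, whose $a_i$ then increases by $1$. Ties are broken in favor of the smallest index. For $c=0$ the convention is that $p_i/0>p_j/0$ whenever $p_i>p_j$, and $p_i/0>p_j/k$ for every $k>0$. $S_c(\mathbf p)$ is the infinite sequence of indices of the parties receiving successive seats. *)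

theory Defs
  imports Complex_Main
begin

text \<open>Parties are indexed 0,...,n-1 (p 0 > p 1 > ... > p (n-1)).
  A seat allocation is a function a :: nat => nat (seats per party).\<close>

definition beats :: "real \<Rightarrow> (nat \<Rightarrow> nat) \<Rightarrow> (nat \<Rightarrow> nat) \<Rightarrow> nat \<Rightarrow> nat \<Rightarrow> bool" where
  "beats c p a i j =
    (if real (a i) + c = 0 \<and> real (a j) + c = 0 then p i > p j
     else if real (a i) + c = 0 then True
     else if real (a j) + c = 0 then False
     else real (p i) / (real (a i) + c) > real (p j) / (real (a j) + c))"

definition winner :: "real \<Rightarrow> (nat \<Rightarrow> nat) \<Rightarrow> nat \<Rightarrow> (nat \<Rightarrow> nat) \<Rightarrow> nat" where
  "winner c p n a = (LEAST i. i < n \<and> (\<forall>j<n. \<not> beats c p a j i))"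

fun alloc :: "real \<Rightarrow> (nat \<Rightarrow> nat) \<Rightarrow> nat \<Rightarrow> nat \<Rightarrow> (nat \<Rightarrow> nat)" where
  "alloc c p n 0 = (\<lambda>_. 0)"
| "alloc c p n (Suc t) =
     (let a = alloc c p n t; w = winner c p n a in a(w := a w + 1))"

text \<open>The seat sequence S_c(p): the t-th entry (t = 0,1,...) is the party receiving seat t+1.\<close>
definition seatseq :: "real \<Rightarrow> (nat \<Rightarrow> nat) \<Rightarrow> nat \<Rightarrow> (nat \<Rightarrow> nat)" where
  "seatseq c p n = (\<lambda>t. winner c p n (alloc c p n t))"

text \<open>Pairs {i,j} with p_i > p_j, represented as (i,j) with i < j < n.\<close>
definition pairs :: "nat \<Rightarrow> (nat \<times> nat) set" where
  "pairs n = {(i, j). i < j \<and> j < n}"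

definition mval :: "(nat \<Rightarrow> nat) \<Rightarrow> nat \<times> nat \<Rightarrow> nat" where
  "mval p ij = (p (fst ij) - p (snd ij)) div gcd (p (fst ij)) (p (snd ij))"

definition Aset :: "nat \<Rightarrow> real set" where
  "Aset m = {real l / real m | l. l < m}"

end

theory Submission
  imports Defs
begin


lemma Aset_img: "m > 0 \<Longrightarrow> Aset m = (\<lambda>l. real l / real m) ` {..<m}"
  unfolding Aset_def by auto

lemma card_Aset: "m > 0 \<Longrightarrow> card (Aset m) = m"
  apply (subst Aset_img, assumption)
  apply (subst card_image)
   apply (auto simp: inj_on_def)
  done

lemma finite_Aset: "finite (Aset m)"
proof (cases "m = 0")
  case True then show ?thesis by (simp add: Aset_def)
next
  case False then show ?thesis by (simp add: Aset_img)
qed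

lemma Aset_Int: assumes "m > 0" "m' > 0" shows "Aset m \<inter> Aset m' = Aset (gcd m m')"
proof
  define g where "g = gcd m m'"
  have g0: "g > 0" using assms by (simp add: g_def)
  obtain \<mu> where mu: "m = g * \<mu>" unfolding g_def by (metis gcd_dvd1 dvdE)
  obtain \<mu>' where mu': "m' = g * \<mu>'" unfolding g_def by (metis gcd_dvd2 dvdE)
  have cop: "coprime \<mu> \<mu>'"
    using mu mu' g0 unfolding g_def
    by (metis assms(1) div_gcd_coprime gcd_eq_0_iff nonzero_mult_div_cancel_left not_gr0)
  show "Aset m \<inter> Aset m' \<subseteq> Aset (gcd m m')"
  proof
    fix x assume "x \<in> Aset m \<inter> Aset m'"
    then have xa: "x \<in> Aset m" and xb: "x \<in> Aset m'" by auto
    from xa obtain l where l: "x = real l / real m" "l < m" unfolding Aset_def by auto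
    from xb obtain l' where l': "x = real l' / real m'" "l' < m'" unfolding Aset_def by auto
    have "real l * real m' = real l' * real m" using l l' assms by (simp add: field_simps)
    hence "l * m' = l' * m" by (metis of_nat_eq_iff of_nat_mult)
    hence "l * \<mu>' = l' * \<mu>" using mu mu' g0 by (simp add: algebra_simps)
    hence "\<mu> dvd l * \<mu>'" by simp
    hence "\<mu> dvd l" using cop by (simp add: coprime_dvd_mult_left_iff)
    then obtain r where r: "l = \<mu> * r" by (auto elim: dvdE)
    have mu0: "\<mu> > 0" using mu assms by auto
    have "x = real r / real g" using l r mu mu0 by (simp add: field_simps)
    moreover have "r < g" using l(2) r mu mu0 by (metis mult.commute mult_less_cancel2)
    ultimately show "x \<in> Aset (gcd m m')" unfolding Aset_def g_def by auto
  qed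
  show "Aset (gcd m m') \<subseteq> Aset m \<inter> Aset m'"
  proof
    fix x assume "x \<in> Aset (gcd m m')"
    then obtain r where r: "x = real r / real g" "r < g" unfolding Aset_def g_def by auto
    have mu0: "\<mu> > 0" "\<mu>' > 0" using mu mu' assms by auto
    have "x = real (r * \<mu>) / real m" "r * \<mu> < m" using r mu mu0 g0 by (auto simp: field_simps)
    moreover have "x = real (r * \<mu>') / real m'" "r * \<mu>' < m'" using r mu' mu0 g0 by (auto simp: field_simps)
    ultimately show "x \<in> Aset m \<inter> Aset m'" unfolding Aset_def by blast
  qed
qed

lemma Aset_Inter: assumes "finite M" "M \<noteq> {}" "\<And>m. m \<in> M \<Longrightarrow> m > 0"
  shows "\<Inter> (Aset ` M) = Aset (Gcd M)"
  using assms
proof (induction M rule: finite_ne_induct)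
  case (singleton x) then show ?case by simp
next
  case (insert x F)
  obtain y where "y \<in> F" using insert.hyps(2) by blast
  hence "\<not> F \<subseteq> {0}" using insert.prems by force
  hence "Gcd F > 0" by (metis Gcd_0_iff gr0I)
  then show ?case using insert Aset_Int[of x "Gcd F"] by simp
qed



definition thr :: "(nat \<Rightarrow> nat) \<Rightarrow> nat \<Rightarrow> nat \<Rightarrow> nat \<Rightarrow> nat \<Rightarrow> real" where
  "thr p i j x y = (real (p j) * real x - real (p i) * real y) / (real (p i) - real (p j))"

lemma refl_Aset: "m > 0 \<Longrightarrow> (\<lambda>x. 1 - x) ` Aset m = {real l / real m | l. 1 \<le> l \<and> l \<le> m}"
proof -
  assume m: "m > 0"
  have "(\<lambda>x. 1 - x) ` Aset m \<subseteq> {real l / real m | l. 1 \<le> l \<and> l \<le> m}"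
  proof
    fix z assume "z \<in> (\<lambda>x. 1 - x) ` Aset m"
    then obtain l where "l < m" "z = 1 - real l / real m" unfolding Aset_def by auto
    then have "z = real (m - l) / real m" "1 \<le> m - l" "m - l \<le> m" using m by (auto simp: field_simps of_nat_diff)
    then show "z \<in> {real l / real m | l. 1 \<le> l \<and> l \<le> m}" by blast
  qed
  moreover have "{real l / real m | l. 1 \<le> l \<and> l \<le> m} \<subseteq> (\<lambda>x. 1 - x) ` Aset m"
  proof
    fix z assume "z \<in> {real l / real m | l. 1 \<le> l \<and> l \<le> m}"
    then obtain l where l: "1 \<le> l" "l \<le> m" "z = real l / real m" by auto
    then have "z = 1 - real (m - l) / real m" "m - l < m" using m by (auto simp: field_simps of_nat_diff)
    then show "z \<in> (\<lambda>x. 1 - x) ` Aset m" unfolding Aset_def by blast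
  qed
  ultimately show ?thesis by blast
qed

lemma thr_set:
  assumes pj: "p j > 0" and pij: "p j < p i"
  shows "{thr p i j x y | x y. True} \<inter> {0<..1} = (\<lambda>x. 1 - x) ` Aset (mval p (i,j))"
proof -
  define g where "g = gcd (p i) (p j)"
  have g0: "g > 0" using pj by (simp add: g_def)
  define u where "u = p i div g"
  define v where "v = p j div g"
  have pu: "p i = g * u" unfolding u_def g_def by simp
  have pv: "p j = g * v" unfolding v_def g_def by simp
  have cop: "coprime u v" unfolding u_def v_def g_def
    by (metis div_gcd_coprime gcd_eq_0_iff pj not_gr0)
  have vu: "v < u" using pij pu pv by auto
  have v0: "v > 0" using pj pv by auto
  have "mval p (i,j) = (p i - p j) div g" unfolding mval_def g_def by simp
  also have "\<dots> = (g * u - g * v) div g" using pu pv by simp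
  also have "\<dots> = (g * (u - v)) div g" by (simp add: diff_mult_distrib2)
  also have "\<dots> = u - v" using g0 by simp
  finally have mv: "mval p (i,j) = u - v" .
  have m0: "u - v > 0" using vu by simp
  have thr_eq: "thr p i j x y = (real_of_int (int v * int x - int u * int y)) / real (u - v)" for x y
  proof -
    have "thr p i j x y = (real g * (real v * real x - real u * real y)) / (real g * (real u - real v))"
      unfolding thr_def pu pv by (simp add: algebra_simps)
    also have "\<dots> = (real v * real x - real u * real y) / (real u - real v)" using g0 by simp
    finally show ?thesis using vu by (simp add: of_nat_diff)
  qed
  have "{thr p i j x y | x y. True} \<inter> {0<..1} = {real l / real (u - v) | l. 1 \<le> l \<and> l \<le> u - v}"
  proof
    show "{thr p i j x y | x y. True} \<inter> {0<..1} \<subseteq> {real l / real (u - v) | l. 1 \<le> l \<and> l \<le> u - v}"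
    proof
      fix z assume "z \<in> {thr p i j x y | x y. True} \<inter> {0<..1}"
      then obtain x y where z: "z = thr p i j x y" "0 < z" "z \<le> 1" by auto
      define k where "k = int v * int x - int u * int y"
      have zk: "z = real_of_int k / real (u - v)" using z thr_eq k_def by simp
      have "0 < real_of_int k" using z(2) zk m0 by (simp add: zero_less_divide_iff)
      hence k1: "1 \<le> k" by simp
      have "real_of_int k \<le> real (u - v)" using z(3) zk m0 by (simp add: divide_le_eq)
      hence k2: "k \<le> int (u - v)" by linarith
      have "z = real (nat k) / real (u - v)" using zk k1 by simp
      moreover have "1 \<le> nat k" "nat k \<le> u - v" using k1 k2 by auto
      ultimately show "z \<in> {real l / real (u - v) | l. 1 \<le> l \<and> l \<le> u - v}" by blast
    qed
    show "{real l / real (u - v) | l. 1 \<le> l \<and> l \<le> u - v} \<subseteq> {thr p i j x y | x y. True} \<inter> {0<..1}"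
    proof
      fix z assume "z \<in> {real l / real (u - v) | l. 1 \<le> l \<and> l \<le> u - v}"
      then obtain l where l: "1 \<le> l" "l \<le> u - v" "z = real l / real (u - v)" by auto
      have "gcd (int v) (int u) = 1" using cop by (simp add: coprime_commute gcd_int_def)
      then obtain s t where st: "s * int v + t * int u = 1" using bezout_int[of "int v" "int u"] by auto
      define K where "K = \<bar>int l * s\<bar> + \<bar>int l * t\<bar>"
      define x where "x = int l * s + K * int u"
      define y where "y = - int l * t + K * int v"
      have K0: "K \<ge> 0" unfolding K_def by simp
      have x0: "x \<ge> 0" unfolding x_def
      proof -
        have "K * int u \<ge> K" using K0 vu by (simp add: mult_le_cancel_left1)
        thus "int l * s + K * int u \<ge> 0" unfolding K_def by linarith
      qed
      have y0: "y \<ge> 0" unfolding y_def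
      proof -
        have "K * int v \<ge> K" using K0 v0 by (simp add: mult_le_cancel_left1)
        thus "- int l * t + K * int v \<ge> 0" unfolding K_def by linarith
      qed
      have "int v * x - int u * y = int l * (s * int v + t * int u)" unfolding x_def y_def
        by (simp add: algebra_simps)
      hence eq: "int v * int (nat x) - int u * int (nat y) = int l" using st x0 y0 by simp
      have "thr p i j (nat x) (nat y) = real_of_int (int l) / real (u - v)" unfolding thr_eq eq ..
      hence "thr p i j (nat x) (nat y) = z" using l(3) by simp
      moreover have "0 < z" "z \<le> 1" using l m0 by (auto simp: divide_le_eq)
      ultimately show "z \<in> {thr p i j x y | x y. True} \<inter> {0<..1}" by auto
    qed
  qed
  then show ?thesis using refl_Aset[of "u - v"] m0 mv by simp
qed



definition good :: "(nat \<Rightarrow> nat) \<Rightarrow> nat \<Rightarrow> bool" where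
  "good p n \<longleftrightarrow> (\<forall>i<n. p i > 0) \<and> (\<forall>i j. i < j \<and> j < n \<longrightarrow> p j < p i)"

definition key :: "real \<Rightarrow> (nat \<Rightarrow> nat) \<Rightarrow> nat \<Rightarrow> nat \<Rightarrow> real" where
  "key c p i x = (real x + c) / real (p i)"

definition lexlt :: "real \<Rightarrow> (nat \<Rightarrow> nat) \<Rightarrow> nat \<Rightarrow> nat \<Rightarrow> nat \<Rightarrow> nat \<Rightarrow> bool" where
  "lexlt c p i x j y \<longleftrightarrow> key c p i x < key c p j y \<or> (key c p i x = key c p j y \<and> i < j)"

lemma lexlt_asym: "lexlt c p i x j y \<Longrightarrow> \<not> lexlt c p j y i x"
  unfolding lexlt_def by auto

lemma lexlt_irrefl: "\<not> lexlt c p i x i x"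
  unfolding lexlt_def by auto

lemma key_nonneg: "c \<ge> 0 \<Longrightarrow> key c p i x \<ge> 0"
  unfolding key_def by simp

lemma key_mono: "p i > 0 \<Longrightarrow> x \<le> x' \<Longrightarrow> key c p i x \<le> key c p i x'"
  unfolding key_def by (simp add: divide_right_mono)

lemma key_zero: "c \<ge> 0 \<Longrightarrow> p i > 0 \<Longrightarrow> key c p i x = 0 \<longleftrightarrow> real x + c = 0"
  unfolding key_def by auto

lemma key_less_iff:
  assumes "p i > 0" "p j > 0" "real x + c > 0" "real y + c > 0"
  shows "key c p j y < key c p i x \<longleftrightarrow> real (p i) / (real x + c) < real (p j) / (real y + c)"
proof -
  have "key c p j y < key c p i x \<longleftrightarrow> (real y + c) * real (p i) < (real x + c) * real (p j)"
    unfolding key_def using assms by (simp add: divide_less_eq less_divide_eq field_simps)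
  also have "\<dots> \<longleftrightarrow> real (p i) / (real x + c) < real (p j) / (real y + c)"
    using assms by (simp add: divide_less_eq less_divide_eq field_simps)
  finally show ?thesis .
qed

lemma key_beats:
  assumes c: "c \<ge> 0" and pi: "p i > 0" and pj: "p j > 0"
    and lt: "key c p j (a j) < key c p i (a i)"
  shows "beats c p a j i"
proof -
  have ki: "key c p i (a i) > 0" using lt key_nonneg[OF c, of p j "a j"] by linarith
  hence bi: "real (a i) + c \<noteq> 0" using key_zero[of c p i "a i"] c pi by auto
  have bi': "real (a i) + c > 0" using bi c by simp
  show ?thesis
  proof (cases "real (a j) + c = 0")
    case True then show ?thesis using bi unfolding beats_def by simp
  next
    case False
    hence "real (a j) + c > 0" using c by simp
    then show ?thesis using False bi key_less_iff[of p i j "a i" c "a j", OF pi pj bi'] lt unfolding beats_def by simp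
  qed
qed

lemma beats_lex:
  assumes g: "good p n" and c: "c \<ge> 0" and i: "i < n" and j: "j < n"
    and b: "beats c p a j i"
  shows "lexlt c p j (a j) i (a i)"
proof -
  have pi: "p i > 0" and pj: "p j > 0" using g i j unfolding good_def by auto
  have ord: "p j > p i \<Longrightarrow> j < i"
  proof (rule ccontr)
    assume "p j > p i" "\<not> j < i"
    then have "i < j \<or> i = j" by auto
    then show False using g j \<open>p j > p i\<close> unfolding good_def by force
  qed
  show ?thesis
  proof (cases "real (a j) + c = 0")
    case Tj: True
    show ?thesis
    proof (cases "real (a i) + c = 0")
      case True
      then have "p j > p i" using Tj b unfolding beats_def by simp
      then show ?thesis using ord Tj True unfolding lexlt_def key_def by simp
    next
      case False
      then have "real (a i) + c > 0" using c by simp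
      then show ?thesis using Tj pi unfolding lexlt_def key_def by simp
    qed
  next
    case Fj: False
    have Fj': "real (a j) + c > 0" using Fj c by simp
    show ?thesis
    proof (cases "real (a i) + c = 0")
      case True
      then show ?thesis using b Fj unfolding beats_def by simp
    next
      case False
      then have "real (a i) + c > 0" using c by simp
      then have "key c p j (a j) < key c p i (a i)"
        using key_less_iff[of p i j "a i" c "a j", OF pi pj _ Fj'] b Fj False unfolding beats_def by simp
      then show ?thesis unfolding lexlt_def by simp
    qed
  qed
qed

lemma beats_irrefl: "\<not> beats c p a i i"
  unfolding beats_def by auto

lemma winner_char:
  assumes g: "good p n" and c: "c \<ge> 0" and n: "n > 0"
  shows "winner c p n a < n \<and> (\<forall>j<n. j \<noteq> winner c p n a \<longrightarrow>
            lexlt c p (winner c p n a) (a (winner c p n a)) j (a j))"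
proof -
  define kk where "kk i = key c p i (a i)" for i
  define K where "K = Min (kk ` {..<n})"
  have "K \<in> kk ` {..<n}" unfolding K_def using n by (intro Min_in) auto
  then obtain i0 where i0: "i0 < n" "kk i0 = K" by auto
  define w where "w = (LEAST i. i < n \<and> kk i = K)"
  have w: "w < n \<and> kk w = K" unfolding w_def using i0 by (metis (mono_tags, lifting) LeastI)
  have wle: "\<And>i. i < n \<Longrightarrow> kk i = K \<Longrightarrow> w \<le> i" unfolding w_def by (rule Least_le) simp
  have Kle: "\<And>j. j < n \<Longrightarrow> K \<le> kk j" unfolding K_def by (rule Min_le) auto
  have wlex: "lexlt c p w (a w) j (a j)" if "j < n" "j \<noteq> w" for j
  proof -
    have "kk w \<le> kk j" using Kle w that by simp
    moreover have "kk j = kk w \<Longrightarrow> w < j" using wle[of j] that w by force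
    ultimately show ?thesis unfolding lexlt_def kk_def by force
  qed
  have "winner c p n a = w"
    unfolding winner_def
  proof (rule Least_equality)
    show "w < n \<and> (\<forall>j<n. \<not> beats c p a j w)"
    proof (intro conjI allI impI)
      show "w < n" using w by simp
      fix j assume j: "j < n"
      show "\<not> beats c p a j w"
      proof
        assume b: "beats c p a j w"
        then have "j \<noteq> w" using beats_irrefl by metis
        then show False using beats_lex[OF g c _ j b] w wlex[OF j] lexlt_asym by blast
      qed
    qed
  next
    fix i assume i: "i < n \<and> (\<forall>j<n. \<not> beats c p a j i)"
    show "w \<le> i"
    proof (rule ccontr)
      assume "\<not> w \<le> i"
      then have ne: "i \<noteq> w" and iw: "i < w" by auto
      have l: "lexlt c p w (a w) i (a i)" using wlex i ne by simp
      have pw: "p w > 0" "p i > 0" using g w i unfolding good_def by auto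
      have "\<not> kk w < kk i" using key_beats[of c p i w a] c pw i w unfolding kk_def by blast
      then show False using l iw unfolding lexlt_def kk_def by auto
    qed
  qed
  then show ?thesis using w wlex by simp
qed

lemma alloc_Suc: "alloc c p n (Suc t) = (alloc c p n t)(seatseq c p n t := alloc c p n t (seatseq c p n t) + 1)"
  by (simp add: seatseq_def Let_def)

lemma order_lemma:
  assumes g: "good p n" and c: "c \<ge> 0" and n: "n > 0" and i: "i < n" and j: "j < n"
    and l: "lexlt c p i x j y"
  shows "alloc c p n t j > y \<Longrightarrow> alloc c p n t i > x"
proof (induction t)
  case 0 then show ?case by simp
next
  case (Suc t)
  define al where "al = alloc c p n t"
  define w where "w = seatseq c p n t"
  have wc: "w < n \<and> (\<forall>k<n. k \<noteq> w \<longrightarrow> lexlt c p w (al w) k (al k))"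
    using winner_char[OF g c n, of al] unfolding w_def al_def seatseq_def by simp
  have S: "alloc c p n (Suc t) = al(w := al w + 1)" unfolding al_def w_def by (rule alloc_Suc)
  have mono: "al i \<le> alloc c p n (Suc t) i" unfolding S by simp
  show ?case
  proof (cases "al j > y")
    case True
    then show ?thesis using Suc.IH mono unfolding al_def by force
  next
    case False
    then have jw: "j = w" and ay: "al j = y" using Suc.prems unfolding S by (auto split: if_splits)
    show ?thesis
    proof (rule ccontr)
      assume "\<not> x < alloc c p n (Suc t) i"
      then have aix: "al i \<le> x" using mono by simp
      have pi: "p i > 0" using g i unfolding good_def by auto
      have km: "key c p i (al i) \<le> key c p i x" using key_mono[of p i "al i" x c, OF pi aix] .
      show False
      proof (cases "i = j")
        case True
        have "key c p i y \<le> key c p i x" using key_mono[of p i y x c] pi aix ay True by simp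
        then show False using l True unfolding lexlt_def by auto
      next
        case False
        then have "lexlt c p j y i (al i)" using wc jw ay i by auto
        then show False using l km False unfolding lexlt_def by auto
      qed
    qed
  qed
qed



lemma seat_lt: "good p n \<Longrightarrow> c \<ge> 0 \<Longrightarrow> n > 0 \<Longrightarrow> seatseq c p n t < n"
  using winner_char unfolding seatseq_def by blast

lemma sum_alloc:
  assumes g: "good p n" and c: "c \<ge> 0" and n: "n > 0"
  shows "(\<Sum>k<n. alloc c p n t k) = t"
proof (induction t)
  case 0 then show ?case by simp
next
  case (Suc t)
  define al where "al = alloc c p n t"
  define w where "w = seatseq c p n t"
  have wn: "w < n" unfolding w_def using seat_lt[OF g c n] .
  have S: "alloc c p n (Suc t) = (\<lambda>k. al k + (if k = w then 1 else 0))"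
    unfolding al_def w_def alloc_Suc by auto
  have "(\<Sum>k<n. alloc c p n (Suc t) k) = (\<Sum>k<n. al k) + (\<Sum>k<n. (if k = w then 1 else 0))"
    unfolding S by (simp add: sum.distrib)
  also have "\<dots> = t + 1" using Suc.IH wn unfolding al_def by simp
  finally show ?case by simp
qed

lemma exists_exceed:
  assumes g: "good p n" and c: "c \<ge> 0" and n: "n > 0" and i: "i < n"
  shows "\<exists>t. alloc c p n t i > x"
proof (rule ccontr)
  assume "\<not> ?thesis"
  then have bnd: "\<And>t. alloc c p n t i \<le> x" by (simp add: not_less)
  define K where "K = key c p i x"
  define B where "B = max x (nat \<lceil>K * real (p 0)\<rceil>) + 1"
  have pos: "\<And>k. k < n \<Longrightarrow> p k > 0" using g unfolding good_def by auto
  have pk0: "\<And>k. k < n \<Longrightarrow> p k \<le> p 0"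
  proof -
    fix k assume "k < n"
    then show "p k \<le> p 0" using g unfolding good_def by (cases k) (auto intro: less_imp_le)
  qed
  have K0: "K \<ge> 0" unfolding K_def using key_nonneg[OF c] .
  have allb: "\<forall>k<n. alloc c p n t k \<le> B" for t
  proof (induction t)
    case 0 then show ?case by simp
  next
    case (Suc t)
    define al where "al = alloc c p n t"
    define w where "w = seatseq c p n t"
    have wc: "w < n \<and> (\<forall>k<n. k \<noteq> w \<longrightarrow> lexlt c p w (al w) k (al k))"
      using winner_char[OF g c n, of al] unfolding w_def al_def seatseq_def by simp
    have S: "alloc c p n (Suc t) = al(w := al w + 1)" unfolding al_def w_def by (rule alloc_Suc)
    show ?case
    proof (intro allI impI)
      fix k assume k: "k < n"
      show "alloc c p n (Suc t) k \<le> B"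
      proof (cases "k = w")
        case False
        then show ?thesis using Suc.IH k unfolding S al_def by simp
      next
        case kw: True
        show ?thesis
        proof (cases "w = i")
          case True
          then show ?thesis using bnd[of "Suc t"] kw unfolding B_def by simp
        next
          case False
          have "lexlt c p w (al w) i (al i)" using wc i False by simp
          then have "key c p w (al w) \<le> key c p i (al i)" unfolding lexlt_def by auto
          also have "\<dots> \<le> K" unfolding K_def using key_mono[of p i "al i" x c] pos[OF i] bnd[of t]
            unfolding al_def by simp
          finally have kk: "key c p w (al w) \<le> K" .
          have pw: "p w > 0" using pos wc by simp
          have "real (al w) + c \<le> K * real (p w)" using kk pw unfolding key_def by (simp add: divide_le_eq)
          also have "\<dots> \<le> K * real (p 0)" using pk0[of w] wc K0 by (simp add: mult_left_mono)
          finally have "real (al w) \<le> K * real (p 0)" using c by simp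
          then have "al w \<le> nat \<lceil>K * real (p 0)\<rceil>" by linarith
          then show ?thesis unfolding S B_def using kw by simp
        qed
      qed
    qed
  qed
  define t where "t = n * B + 1"
  have "t = (\<Sum>k<n. alloc c p n t k)" using sum_alloc[OF g c n] by simp
  also have "\<dots> \<le> (\<Sum>k<n. B)" using allb[of t] by (intro sum_mono) simp
  also have "\<dots> = n * B" by simp
  finally show False unfolding t_def by simp
qed

lemma lexlt_same: "p i > 0 \<Longrightarrow> lexlt c p i y i x \<longleftrightarrow> y < x"
  unfolding lexlt_def key_def by (simp add: divide_less_eq)

lemma claimB:
  assumes g: "good p n" and c: "c \<ge> 0" and c': "c' \<ge> 0"
    and eq: "seatseq c p n = seatseq c' p n" and i: "i < n" and j: "j < n"
    and l1: "lexlt c p j y i x" and l2: "lexlt c' p i x j y"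
  shows False
proof -
  have n: "n > 0" using i by simp
  have aleq: "alloc c p n t = alloc c' p n t" for t
  proof (induction t)
    case 0 then show ?case by simp
  next
    case (Suc t) then show ?case using alloc_Suc[of c p n t] alloc_Suc[of c' p n t] eq by simp
  qed
  define al where "al = alloc c p n"
  have ij: "i \<noteq> j"
  proof
    assume "i = j"
    moreover have "p i > 0" using g i unfolding good_def by auto
    ultimately show False using l1 l2 lexlt_same[of p i c] lexlt_same[of p i c'] by auto
  qed
  obtain t where t: "al t i > x" using exists_exceed[OF g c n i] unfolding al_def by blast
  define P where "P t \<longleftrightarrow> al t i > x \<or> al t j > y" for t
  define t0 where "t0 = (LEAST t. P t)"
  have Pt0: "P t0" unfolding t0_def by (rule LeastI[of P t]) (simp add: P_def t)
  have t0ne: "t0 \<noteq> 0"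
  proof
    assume "t0 = 0"
    with Pt0 show False unfolding P_def al_def by simp
  qed
  then obtain t1 where t1: "t0 = Suc t1" using not0_implies_Suc by blast
  have nP: "\<not> P t1" using not_less_Least[of t1 P] t1 unfolding t0_def by simp
  have both: "al t0 i > x \<and> al t0 j > y"
  proof (cases "al t0 i > x")
    case True
    then have "alloc c p n t0 i > x" by (simp add: al_def)
    then have "alloc c p n t0 j > y" by (rule order_lemma[OF g c n j i l1])
    then have "al t0 j > y" by (simp add: al_def)
    then show ?thesis using True by simp
  next
    case False
    then have aj: "al t0 j > y" using Pt0 unfolding P_def by simp
    then have "alloc c' p n t0 j > y" using aleq by (simp add: al_def)
    then have "alloc c' p n t0 i > x" by (rule order_lemma[OF g c' n i j l2])
    then have "al t0 i > x" using aleq by (simp add: al_def)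
    then show ?thesis using aj by simp
  qed
  have "al t0 = (al t1)(seatseq c p n t1 := al t1 (seatseq c p n t1) + 1)"
    unfolding al_def t1 by (rule alloc_Suc)
  then have "al t0 i = al t1 i \<or> al t0 j = al t1 j" using ij by auto
  then show False using both nP unfolding P_def by auto
qed

lemma claimA:
  assumes g: "good p n" and c: "c \<ge> 0" and c': "c' \<ge> 0"
    and same: "\<And>i j x y. i < n \<Longrightarrow> j < n \<Longrightarrow> lexlt c p i x j y = lexlt c' p i x j y"
  shows "seatseq c p n = seatseq c' p n"
proof (cases "n = 0")
  case True
  then show ?thesis unfolding seatseq_def winner_def by simp
next
  case False
  then have n: "n > 0" by simp
  have weq: "winner c p n a = winner c' p n a" for a
  proof -
    let ?w = "winner c p n a" and ?w' = "winner c' p n a"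
    have A: "?w < n \<and> (\<forall>j<n. j \<noteq> ?w \<longrightarrow> lexlt c p ?w (a ?w) j (a j))" using winner_char[OF g c n] .
    have B: "?w' < n \<and> (\<forall>j<n. j \<noteq> ?w' \<longrightarrow> lexlt c' p ?w' (a ?w') j (a j))" using winner_char[OF g c' n] .
    show ?thesis
    proof (rule ccontr)
      assume ne: "?w \<noteq> ?w'"
      then have "lexlt c p ?w (a ?w) ?w' (a ?w')" using A B by auto
      moreover have "lexlt c p ?w' (a ?w') ?w (a ?w)" using B A ne same by auto
      ultimately show False using lexlt_asym by blast
    qed
  qed
  have "alloc c p n t = alloc c' p n t" for t
    by (induction t) (simp_all add: weq Let_def)
  then show ?thesis unfolding seatseq_def using weq by simp
qed

lemma lex_thr:
  assumes g: "good p n" and ij: "i < j" and j: "j < n"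
  shows "lexlt c p i x j y \<longleftrightarrow> thr p i j x y \<le> c"
    and "lexlt c p j y i x \<longleftrightarrow> \<not> thr p i j x y \<le> c"
proof -
  have pi: "p i > 0" and pj: "p j > 0" and pij: "p j < p i" using g ij j unfolding good_def by auto
  have d: "real (p i) - real (p j) > 0" using pij by simp
  have "key c p i x \<le> key c p j y \<longleftrightarrow> (real x + c) * real (p j) \<le> (real y + c) * real (p i)"
    unfolding key_def using pi pj by (simp add: divide_le_eq le_divide_eq field_simps)
  also have "\<dots> \<longleftrightarrow> real (p j) * real x - real (p i) * real y \<le> c * (real (p i) - real (p j))"
    by (simp add: algebra_simps)
  also have "\<dots> \<longleftrightarrow> thr p i j x y \<le> c" unfolding thr_def using d by (simp add: divide_le_eq)
  finally have kt: "key c p i x \<le> key c p j y \<longleftrightarrow> thr p i j x y \<le> c" .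
  show "lexlt c p i x j y \<longleftrightarrow> thr p i j x y \<le> c" using kt ij unfolding lexlt_def by auto
  show "lexlt c p j y i x \<longleftrightarrow> \<not> thr p i j x y \<le> c" using kt ij unfolding lexlt_def by auto
qed



definition Th :: "(nat \<Rightarrow> nat) \<Rightarrow> nat \<Rightarrow> real set" where
  "Th p n = {thr p i j x y | i j x y. i < j \<and> j < n} \<inter> {0<..1}"

definition Fc :: "(nat \<Rightarrow> nat) \<Rightarrow> nat \<Rightarrow> real \<Rightarrow> real set" where
  "Fc p n c = {t \<in> Th p n. t \<le> c}"

lemma thr_le_iff:
  assumes "Fc p n c = Fc p n c'" "c \<in> {0..1}" "c' \<in> {0..1}" "i < j" "j < n"
  shows "thr p i j x y \<le> c \<longleftrightarrow> thr p i j x y \<le> c'"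
proof -
  let ?t = "thr p i j x y"
  consider "?t \<le> 0" | "?t > 1" | "?t \<in> Th p n" using assms unfolding Th_def by force
  then show ?thesis
  proof cases
    case 3
    then have "?t \<le> c \<longleftrightarrow> ?t \<in> Fc p n c" "?t \<le> c' \<longleftrightarrow> ?t \<in> Fc p n c'" unfolding Fc_def by auto
    then show ?thesis using assms by simp
  qed (use assms in auto)
qed

lemma seq_iff:
  assumes g: "good p n" and c: "c \<in> {0..1}" and c': "c' \<in> {0..1}"
  shows "seatseq c p n = seatseq c' p n \<longleftrightarrow> Fc p n c = Fc p n c'"
proof
  assume F: "Fc p n c = Fc p n c'"
  show "seatseq c p n = seatseq c' p n"
  proof (rule claimA[OF g])
    show "c \<ge> 0" "c' \<ge> 0" using c c' by auto
    fix i j x y assume i: "i < n" and j: "j < n"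
    consider "i < j" | "j < i" | "i = j" by linarith
    then show "lexlt c p i x j y = lexlt c' p i x j y"
    proof cases
      case 1
      then show ?thesis using lex_thr(1)[OF g 1 j] thr_le_iff[OF F c c' 1 j] by simp
    next
      case 2
      then show ?thesis using lex_thr(2)[OF g 2 i] thr_le_iff[OF F c c' 2 i] by simp
    next
      case 3
      have "p i > 0" using g i unfolding good_def by auto
      then show ?thesis using 3 lexlt_same[of p i c] lexlt_same[of p i c'] by simp
    qed
  qed
next
  assume eq: "seatseq c p n = seatseq c' p n"
  show "Fc p n c = Fc p n c'"
  proof (rule ccontr)
    assume "Fc p n c \<noteq> Fc p n c'"
    then obtain t where t: "t \<in> Th p n" "(t \<le> c \<and> \<not> t \<le> c') \<or> (\<not> t \<le> c \<and> t \<le> c')"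
      unfolding Fc_def by auto
    then obtain i j x y where ij: "i < j" "j < n" and tt: "t = thr p i j x y" unfolding Th_def by auto
    have i: "i < n" using ij by simp
    have c0: "c \<ge> 0" "c' \<ge> 0" using c c' by auto
    from t(2) show False
    proof
      assume h: "t \<le> c \<and> \<not> t \<le> c'"
      have "lexlt c' p j y i x" using lex_thr(2)[OF g ij] h tt by simp
      moreover have "lexlt c p i x j y" using lex_thr(1)[OF g ij] h tt by simp
      ultimately show False using claimB[OF g c0(2) c0(1) eq[symmetric] i ij(2)] by blast
    next
      assume h: "\<not> t \<le> c \<and> t \<le> c'"
      have "lexlt c p j y i x" using lex_thr(2)[OF g ij] h tt by simp
      moreover have "lexlt c' p i x j y" using lex_thr(1)[OF g ij] h tt by simp
      ultimately show False using claimB[OF g c0(1) c0(2) eq i ij(2)] by blast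
    qed
  qed
qed

lemma card_image_same:
  assumes "\<And>x y. x \<in> A \<Longrightarrow> y \<in> A \<Longrightarrow> f x = f y \<longleftrightarrow> g x = g y"
  shows "card (f ` A) = card (g ` A)"
proof -
  define h where "h z = g (SOME x. x \<in> A \<and> f x = z)" for z
  have hf: "h (f x) = g x" if "x \<in> A" for x
  proof -
    have "(SOME y. y \<in> A \<and> f y = f x) \<in> A \<and> f (SOME y. y \<in> A \<and> f y = f x) = f x"
      by (rule someI[of _ x]) (simp add: that)
    then show ?thesis unfolding h_def using assms that by blast
  qed
  have "g ` A = h ` f ` A" using hf by (auto simp: image_comp)
  moreover have "inj_on h (f ` A)"
    unfolding inj_on_def using hf assms by auto
  ultimately show ?thesis by (simp add: card_image)
qed

lemma mval_pos:
  assumes g: "good p n" and ij: "i < j" "j < n"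
  shows "mval p (i,j) > 0"
proof -
  have pj: "p j > 0" and pij: "p j < p i" using g ij unfolding good_def by auto
  have "gcd (p i) (p j) dvd p i - p j" by (simp add: dvd_diff_nat)
  moreover have "p i - p j > 0" using pij by simp
  ultimately have "gcd (p i) (p j) \<le> p i - p j" by (rule dvd_imp_le)
  moreover have "gcd (p i) (p j) > 0" using pj by simp
  ultimately show ?thesis unfolding mval_def by (simp add: div_greater_zero_iff)
qed

definition U :: "(nat \<Rightarrow> nat) \<Rightarrow> nat \<Rightarrow> real set" where
  "U p n = (\<Union>k \<in> pairs n. Aset (mval p k))"

lemma finite_pairs: "finite (pairs n)"
proof -
  have "pairs n \<subseteq> {..<n} \<times> {..<n}" unfolding pairs_def by auto
  then show ?thesis by (rule finite_subset) simp
qed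

lemma finite_U: "finite (U p n)"
  unfolding U_def using finite_pairs finite_Aset by blast

lemma Th_eq:
  assumes g: "good p n"
  shows "Th p n = (\<lambda>x. 1 - x) ` U p n"
proof -
  have "Th p n = (\<Union>k \<in> pairs n. {thr p (fst k) (snd k) x y | x y. True} \<inter> {0<..1})"
    unfolding Th_def pairs_def by (auto; blast)
  also have "\<dots> = (\<Union>k \<in> pairs n. (\<lambda>x. 1 - x) ` Aset (mval p k))"
  proof (rule SUP_cong[OF refl])
    fix k assume "k \<in> pairs n"
    then obtain i j where k: "k = (i,j)" "i < j" "j < n" unfolding pairs_def by auto
    have "p j > 0" "p j < p i" using g k unfolding good_def by auto
    then show "{thr p (fst k) (snd k) x y | x y. True} \<inter> {0<..1} = (\<lambda>x. 1 - x) ` Aset (mval p k)"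
      using thr_set[of p j i] k by simp
  qed
  also have "\<dots> = (\<lambda>x. 1 - x) ` U p n" unfolding U_def by (simp add: image_UN)
  finally show ?thesis .
qed

lemma card_Th: "good p n \<Longrightarrow> card (Th p n) = card (U p n)"
  by (simp add: Th_eq card_image inj_on_def)

lemma card_F:
  assumes g: "good p n"
  shows "card (Fc p n ` {0..1}) = card (Th p n) + 1"
proof -
  have fin: "finite (Th p n)" using Th_eq[OF g] finite_U by simp
  have sub: "Th p n \<subseteq> {0<..1}" unfolding Th_def by auto
  have "Fc p n ` {0..1} = insert {} (Fc p n ` Th p n)"
  proof
    show "Fc p n ` {0..1} \<subseteq> insert {} (Fc p n ` Th p n)"
    proof
      fix S assume "S \<in> Fc p n ` {0..1}"
      then obtain c where c: "c \<in> {0..1}" "S = Fc p n c" by auto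
      show "S \<in> insert {} (Fc p n ` Th p n)"
      proof (cases "S = {}")
        case False
        have finS: "finite S" using c fin unfolding Fc_def by simp
        define m where "m = Max S"
        have mS: "m \<in> S" unfolding m_def using finS False by simp
        have "S = Fc p n m"
        proof
          show "S \<subseteq> Fc p n m" using c finS unfolding m_def Fc_def by auto
          show "Fc p n m \<subseteq> S" using c mS unfolding Fc_def by auto
        qed
        moreover have "m \<in> Th p n" using mS c unfolding Fc_def by simp
        ultimately show ?thesis by simp
      qed simp
    qed
    show "insert {} (Fc p n ` Th p n) \<subseteq> Fc p n ` {0..1}"
    proof -
      have "Fc p n 0 = {}" using sub unfolding Fc_def by force
      moreover have "Th p n \<subseteq> {0..1}" using sub by auto
      ultimately show ?thesis by (metis image_eqI image_mono atLeastAtMost_iff insert_subset order_refl zero_le_one)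
    qed
  qed
  moreover have "{} \<notin> Fc p n ` Th p n" unfolding Fc_def by auto
  moreover have "inj_on (Fc p n) (Th p n)"
  proof (rule inj_onI)
    fix a b assume a: "a \<in> Th p n" and b: "b \<in> Th p n" and e: "Fc p n a = Fc p n b"
    have "a \<in> Fc p n b" "b \<in> Fc p n a" using a b e unfolding Fc_def by auto
    then show "a = b" unfolding Fc_def by auto
  qed
  ultimately show ?thesis using fin by (simp add: card_image)
qed

lemma part1:
  assumes g: "good p n"
  shows "card {seatseq c p n | c. c \<in> {0..1}} = 1 + card (U p n)"
proof -
  have "{seatseq c p n | c. c \<in> {0..1}} = (\<lambda>c. seatseq c p n) ` {0..1}" by auto
  then have "card {seatseq c p n | c. c \<in> {0..1}} = card (Fc p n ` {0..1})"
    using card_image_same[of "{0..1}" "\<lambda>c. seatseq c p n" "Fc p n"] seq_iff[OF g] by simp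
  then show ?thesis using card_F[OF g] card_Th[OF g] by simp
qed

lemma part2:
  assumes g: "good p n"
  shows "int (card (U p n)) = (\<Sum>K \<in> {K. K \<subseteq> pairs n \<and> K \<noteq> {}}.
                    (-1) ^ (card K + 1) * int (Gcd (mval p ` K)))"
proof -
  interpret Incl_Excl finite "int o card"
    by unfold_locales (auto simp add: card_Un_disjnt)
  have "int (card (U p n)) = (\<Sum>B | B \<subseteq> pairs n \<and> B \<noteq> {}. (- 1) ^ (card B + 1) * (int o card) (\<Inter> ((\<lambda>k. Aset (mval p k)) ` B)))"
    unfolding U_def using restricted_indexed[of "pairs n" "\<lambda>k. Aset (mval p k)"] finite_pairs finite_Aset by simp
  also have "\<dots> = (\<Sum>K \<in> {K. K \<subseteq> pairs n \<and> K \<noteq> {}}. (-1) ^ (card K + 1) * int (Gcd (mval p ` K)))"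
  proof (rule sum.cong[OF refl])
    fix K assume K: "K \<in> {K. K \<subseteq> pairs n \<and> K \<noteq> {}}"
    have fK: "finite K" using K finite_pairs finite_subset by auto
    have pos: "\<And>m. m \<in> mval p ` K \<Longrightarrow> m > 0"
    proof -
      fix m assume "m \<in> mval p ` K"
      then obtain i j where ij: "(i,j) \<in> K" "m = mval p (i,j)" by auto
      then have "i < j" "j < n" using K unfolding pairs_def by auto
      then show "m > 0" using mval_pos[OF g] ij by simp
    qed
    have "\<Inter> ((\<lambda>k. Aset (mval p k)) ` K) = \<Inter> (Aset ` (mval p ` K))" by (simp add: image_comp)
    also have "\<dots> = Aset (Gcd (mval p ` K))" using Aset_Inter[of "mval p ` K"] fK K pos by auto
    finally have I: "\<Inter> ((\<lambda>k. Aset (mval p k)) ` K) = Aset (Gcd (mval p ` K))" .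
    obtain k where "k \<in> K" using K by blast
    then have "mval p k \<in> mval p ` K" "mval p k > 0" using pos by auto
    then have "\<not> mval p ` K \<subseteq> {0}" by force
    then have "Gcd (mval p ` K) > 0" by (metis Gcd_0_iff gr0I)
    then show "(- 1) ^ (card K + 1) * (int o card) (\<Inter> ((\<lambda>k. Aset (mval p k)) ` K)) = (-1) ^ (card K + 1) * int (Gcd (mval p ` K))"
      using I card_Aset by simp
  qed
  finally show ?thesis .
qed


theorem mainTheorem18:
  fixes p :: "nat \<Rightarrow> nat" and n :: nat
  assumes pos: "\<And>i. i < n \<Longrightarrow> p i > 0"
    and decr: "\<And>i j. i < j \<Longrightarrow> j < n \<Longrightarrow> p j < p i"
  shows "card {seatseq c p n | c. c \<in> {0..1}}
           = 1 + card (\<Union>k \<in> pairs n. Aset (mval p k))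
         \<and> int (1 + card (\<Union>k \<in> pairs n. Aset (mval p k)))
           = 1 + (\<Sum>K \<in> {K. K \<subseteq> pairs n \<and> K \<noteq> {}}.
                    (-1) ^ (card K + 1) * int (Gcd (mval p ` K)))"
proof -
  have g: "good p n" unfolding good_def using pos decr by auto
  show ?thesis using part1[OF g] part2[OF g] unfolding U_def by simp
qed

end
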